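(* Let $m\ge 2$. Consider either (i) $\xi=\operatorname{diam}$ and $\zeta$ the covering radius $\zeta(\Lambda)=\inf\{t>0:\Lambda+t\mathbf{B}=\mathbb{R}^m\}$, in the undirected case ($\mathcal{G}=C_{\mathbb{Z}^m/\Lambda}(I)$) or the directed case ($\mathcal{G}=C^+_{\mathbb{Z}^m/\Lambda}(I)$) with the corresponding $\mathbf{B}$; or (ii) the directed case, $\xi=\operatorname{girth}$ and $\zeta(\Lambda)=\inf\{t>0:t\mathbf{B}\cap\Lambda\neq\{0\}\}$. Then there is a constant $C$ such that for every finite index subgroup $\Lambda<\mathbb{Z}^m$, $|\xi(\mathcal{G})-\zeta(\Lambda)|\le C$ and $\big||\Lambda|^{-1/m}\xi(\mathcal{G})-\zeta(\bar\Lambda)\big|\le C|\Lambda|^{-1/m}$.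
   Context: $I$ is the standard basis of $\mathbb{Z}^m$; $C_{\mathbb{Z}^m/\Lambda}(I)$ is the Cayley graph of $\mathbb{Z}^m/\Lambda$ with respect to the images of the standard basis vectors ($x$ adjacent to $x+e_j$), and $C^+_{\mathbb{Z}^m/\Lambda}(I)$ the Cayley digraph (edges $x\to x+e_j$), with directed path distance. The diameter is the maximum distance between vertices (ordered pairs in the directed case); the girth of a digraph is the length of a shortest directed cycle. $|\Lambda|$ is the covolume (index) of $\Lambda$ and $\bar\Lambda=|\Lambda|^{-1/m}\Lambda$. $\mathbf{B}=\{v\in\mathbb{R}^m:\sum|v_i|<1\}$ in the undirected case and $\mathbf{B}=\{v\in\mathbb{R}^m:v_i\ge0\ \forall i,\ \sum v_i<1\}$ in the directed case. *)

theory Defs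
  imports "HOL-Analysis.Analysis"
begin

text \<open>Subgroups of Z^m (Z^m rendered as int ^ 'n, m = CARD('n)).\<close>

definition is_subgroup :: "(int ^ 'n) set \<Rightarrow> bool" where
  "is_subgroup L \<longleftrightarrow> 0 \<in> L \<and> (\<forall>x\<in>L. \<forall>y\<in>L. x + y \<in> L) \<and> (\<forall>x\<in>L. - x \<in> L)"

text \<open>The quotient group Z^m / L as a set of cosets.\<close>
definition cosets :: "(int ^ 'n) set \<Rightarrow> (int ^ 'n) set set" where
  "cosets L = UNIV // {(x, y). x - y \<in> L}"

definition finite_index :: "(int ^ 'n) set \<Rightarrow> bool" where
  "finite_index L \<longleftrightarrow> finite (cosets L)"

text \<open>Covolume = index |L|.\<close>
definition covol :: "(int ^ 'n) set \<Rightarrow> nat" where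
  "covol L = card (cosets L)"

text \<open>Undirected Cayley graph: a step is \<open>x \<mapsto> x \<plusminus> e_j\<close>; a walk is a list of steps.\<close>
definition ustep :: "'n \<times> bool \<Rightarrow> int ^ 'n" where
  "ustep s = (if snd s then axis (fst s) 1 else - axis (fst s) 1)"

text \<open>Graph distance in \<open>C_{Z^m/L}(I)\<close> between the vertices x + L and y + L.\<close>
definition udist :: "(int ^ 'n) set \<Rightarrow> int ^ 'n \<Rightarrow> int ^ 'n \<Rightarrow> nat" where
  "udist L x y = (LEAST k. \<exists>ss. length ss = k \<and> x + sum_list (map ustep ss) - y \<in> L)"

definition udiam :: "(int ^ 'n) set \<Rightarrow> nat" where
  "udiam L = Max {udist L x y | x y. True}"

text \<open>Directed Cayley graph: edges \<open>x \<rightarrow> x + e_j\<close>.\<close>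
definition dstep :: "'n \<Rightarrow> int ^ 'n" where
  "dstep j = axis j 1"

definition ddist :: "(int ^ 'n) set \<Rightarrow> int ^ 'n \<Rightarrow> int ^ 'n \<Rightarrow> nat" where
  "ddist L x y = (LEAST k. \<exists>js. length js = k \<and> x + sum_list (map dstep js) - y \<in> L)"

definition ddiam :: "(int ^ 'n) set \<Rightarrow> nat" where
  "ddiam L = Max {ddist L x y | x y. True}"

text \<open>Girth of the directed Cayley graph: length of a shortest directed cycle,
  i.e. a closed walk of length k \<ge> 1 visiting k distinct vertices
  (cosets of the partial sums).\<close>
definition dgirth :: "(int ^ 'n) set \<Rightarrow> nat" where
  "dgirth L = (LEAST k. k \<ge> 1 \<and> (\<exists>js. length js = k \<and>
      sum_list (map dstep js) \<in> L \<and>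
      (\<forall>i<k. \<forall>i'<k. i \<noteq> i' \<longrightarrow>
          sum_list (map dstep (take i js)) - sum_list (map dstep (take i' js)) \<notin> L)))"

text \<open>Embedding Z^m into R^m.\<close>
definition emb :: "int ^ 'n \<Rightarrow> real ^ 'n" where
  "emb v = (\<chi> i. real_of_int (v $ i))"

text \<open>The bodies B.\<close>
definition Bu :: "(real ^ 'n) set" where
  "Bu = {v. (\<Sum>i\<in>UNIV. \<bar>v $ i\<bar>) < 1}"

definition Bd :: "(real ^ 'n) set" where
  "Bd = {v. (\<forall>i. 0 \<le> v $ i) \<and> (\<Sum>i\<in>UNIV. v $ i) < 1}"

text \<open>Covering radius of a set R of points in R^m w.r.t. body B.\<close>
definition cov_radius :: "(real ^ 'n) set \<Rightarrow> (real ^ 'n) set \<Rightarrow> real" where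
  "cov_radius B R = Inf {t. t > 0 \<and> {l + t *\<^sub>R b | l b. l \<in> R \<and> b \<in> B} = UNIV}"

text \<open>First minimum: inf {t > 0 : tB \<inter> R \<noteq> {0}}.\<close>
definition min_radius :: "(real ^ 'n) set \<Rightarrow> (real ^ 'n) set \<Rightarrow> real" where
  "min_radius B R = Inf {t. t > 0 \<and> ((\<lambda>b. t *\<^sub>R b) ` B) \<inter> R \<noteq> {0}}"

text \<open>The real lattice L and its normalisation \<open>L-bar = |L|^(-1/m) L\<close>.\<close>
definition rlat :: "(int ^ 'n) set \<Rightarrow> (real ^ 'n) set" where
  "rlat L = emb ` L"

definition nlat :: "(int ^ 'n) set \<Rightarrow> (real ^ 'n) set" where
  "nlat L = (\<lambda>v. (real (covol L) powr (- 1 / real CARD('n))) *\<^sub>R v) ` rlat L"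

end

theory Submission
  imports Defs
begin



lemma axis_add_int: "axis j (a::int) + axis j b = axis j (a+b)"
  by (simp add: axis_def vec_eq_iff)
lemma axis_neg_int: "- axis j (a::int) = axis j (-a)"
  by (simp add: axis_def vec_eq_iff)
lemma axis_nth_if: "axis j a $ i = (if i = j then a else 0)"
  by (simp add: axis_def)

lemma sg_diff: "is_subgroup L \<Longrightarrow> x \<in> L \<Longrightarrow> y \<in> L \<Longrightarrow> x - y \<in> L"
  unfolding is_subgroup_def by (metis diff_conv_add_uminus)

lemma sg_sum: assumes "is_subgroup L" "finite A" "(\<forall>i\<in>A. f i \<in> L)" shows "sum f A \<in> L"
  using assms(2,3) by (induction A rule: finite_induct) (use assms(1) in \<open>auto simp: is_subgroup_def\<close>)

lemma sg_axis_nat: "is_subgroup L \<Longrightarrow> axis j N \<in> L \<Longrightarrow> axis j (int k * N) \<in> L"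
proof (induction k)
  case 0 then show ?case by (simp add: is_subgroup_def axis_def vec_eq_iff zero_vec_def[symmetric] flip: zero_vec_def)
next
  case (Suc k)
  have "axis j (int (Suc k) * N) = axis j (int k * N) + axis j N"
    by (simp add: axis_add_int algebra_simps)
  then show ?case using Suc by (simp add: is_subgroup_def)
qed

lemma sg_axis_int: "is_subgroup L \<Longrightarrow> axis j N \<in> L \<Longrightarrow> axis j (q * N) \<in> L"
proof (cases "q \<ge> 0")
  case True
  assume a: "is_subgroup L" "axis j N \<in> L"
  then show ?thesis using sg_axis_nat[OF a, of "nat q"] True by simp
next
  case False
  assume a: "is_subgroup L" "axis j N \<in> L"
  have "axis j (int (nat (-q)) * N) \<in> L" by (rule sg_axis_nat[OF a])
  then have "- axis j (int (nat (-q)) * N) \<in> L" using a by (simp add: is_subgroup_def)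
  then show ?thesis using False by (simp add: axis_neg_int)
qed

lemma vec_axis_sum: "(\<Sum>j\<in>UNIV. axis j (u $ j)) = (u :: int ^ 'n)"
  by (simp add: vec_eq_iff sum_component axis_nth_if)

lemma sg_dvd: assumes "is_subgroup L" "\<forall>j. axis j N \<in> L" "\<forall>i. N dvd u $ i"
  shows "(u :: int ^ 'n) \<in> L"
proof -
  have "\<forall>j\<in>UNIV. axis j (u $ j) \<in> L"
  proof
    fix j :: 'n
    obtain q where "u $ j = q * N" using assms(3) by (metis dvd_def mult.commute)
    then show "axis j (u $ j) \<in> L" using sg_axis_int[OF assms(1)] assms(2) by simp
  qed
  then have "(\<Sum>j\<in>UNIV. axis j (u $ j)) \<in> L" by (intro sg_sum[OF assms(1)]) auto
  then show ?thesis by (simp add: vec_axis_sum)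
qed

lemma class_eq: assumes "is_subgroup L" "{(x, y). x - y \<in> L} `` {a} = {(x, y). x - y \<in> L} `` {b}"
  shows "a - b \<in> L"
proof -
  have "b \<in> {(x, y). x - y \<in> L} `` {b}" using assms(1) by (simp add: is_subgroup_def)
  then have "b \<in> {(x, y). x - y \<in> L} `` {a}" using assms(2) by simp
  then show ?thesis by simp
qed

lemma fi_axis1: assumes "is_subgroup L" "finite_index (L :: (int^'n) set)"
  shows "\<exists>d. d > 0 \<and> axis j d \<in> L"
proof -
  let ?r = "{(x, y). x - y \<in> (L :: (int^'n) set)}"
  let ?f = "\<lambda>k::nat. ?r `` {axis j (int k)}"
  let ?n = "card (cosets L)"
  have sub: "?f ` {0..?n} \<subseteq> cosets L" unfolding cosets_def by (intro image_subsetI quotientI) simp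
  have "card (?f ` {0..?n}) \<le> ?n" using card_mono[OF _ sub] assms(2) finite_index_def by auto
  then have "card (?f ` {0..?n}) < card {0..?n}" by simp
  then have "\<not> inj_on ?f {0..?n}" using pigeonhole by blast
  then obtain a b where ab: "a \<noteq> b" "?f a = ?f b" unfolding inj_on_def by blast
  then have "axis j (int a) - axis j (int b) \<in> L" using class_eq[OF assms(1)] by blast
  moreover have "axis j (int a) - axis j (int b) = axis j (int a - int b)" by (simp add: axis_def vec_eq_iff)
  ultimately have "axis j (int a - int b) \<in> L" by simp
  then have h: "axis j (int a - int b) \<in> L \<and> - axis j (int a - int b) \<in> L" using assms(1) by (simp add: is_subgroup_def)
  show ?thesis
  proof (cases "a > b")
    case True then show ?thesis using h by (intro exI[of _ "int a - int b"]) auto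
  next
    case False then show ?thesis using h ab by (intro exI[of _ "int b - int a"]) (auto simp: axis_neg_int)
  qed
qed

lemma fi_axis: assumes "is_subgroup L" "finite_index (L :: (int^'n) set)"
  shows "\<exists>N. N > 0 \<and> (\<forall>j. axis j N \<in> L)"
proof -
  obtain d where d: "\<And>j. d j > 0 \<and> axis j (d j) \<in> L" using fi_axis1[OF assms] by metis
  define N where "N = (\<Prod>j\<in>UNIV. d j)"
  have "N > 0" unfolding N_def using d by (simp add: prod_pos)
  moreover have "axis j N \<in> L" for j
  proof -
    have "d j dvd N" unfolding N_def by (simp add: dvd_prodI)
    then obtain q where "N = q * d j" by (metis dvd_def mult.commute)
    then show ?thesis using sg_axis_int[OF assms(1)] d by simp
  qed
  ultimately show ?thesis by blast
qed




definition norm1 :: "int ^ 'n \<Rightarrow> int" where "norm1 v = (\<Sum>i\<in>UNIV. \<bar>v $ i\<bar>)"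
definition csum :: "int ^ 'n \<Rightarrow> int" where "csum v = (\<Sum>i\<in>UNIV. v $ i)"

lemma norm1_nonneg: "norm1 v \<ge> 0" unfolding norm1_def by (simp add: sum_nonneg)

lemma ustep_nth: "ustep s $ i = (if i = fst s then (if snd s then 1 else -1) else 0)"
  by (simp add: ustep_def axis_def)
lemma dstep_nth: "dstep j $ i = (if i = j then 1 else 0)"
  by (simp add: dstep_def axis_def)

lemma U1: "nat (norm1 (v::int^'n)) = n \<Longrightarrow> \<exists>ss. length ss = n \<and> sum_list (map ustep ss) = v"
proof (induction n arbitrary: v)
  case 0
  then have "norm1 v = 0" using norm1_nonneg[of v] by simp
  then have "\<forall>i\<in>UNIV. \<bar>v $ i\<bar> = 0" unfolding norm1_def by (subst (asm) sum_nonneg_eq_0_iff) auto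
  then have "v = 0" by (simp add: vec_eq_iff)
  then show ?case by (intro exI[of _ "[]"]) simp
next
  case (Suc n)
  then have "norm1 v \<noteq> 0" by simp
  then obtain j where j: "v $ j \<noteq> 0" unfolding norm1_def by (metis abs_0 sum.neutral)
  define s where "s = (j, v $ j > 0)"
  define w where "w = v - ustep s"
  have pw: "\<bar>w $ i\<bar> = \<bar>v $ i\<bar> - (if i = j then 1 else 0)" for i
    using j by (auto simp: w_def ustep_nth s_def)
  have "norm1 w = norm1 v - 1"
    unfolding norm1_def pw by (simp add: sum_subtractf)
  then have "nat (norm1 w) = n" using Suc.prems by simp
  then obtain ss where "length ss = n" "sum_list (map ustep ss) = w" using Suc.IH by blast
  then have "length (s # ss) = Suc n \<and> sum_list (map ustep (s # ss)) = v" unfolding w_def by simp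
  then show ?case by blast
qed

lemma U2: "norm1 (sum_list (map ustep ss) :: int^'n) \<le> int (length ss)"
proof (induction ss)
  case Nil then show ?case by (simp add: norm1_def)
next
  case (Cons s ss)
  have "norm1 (ustep s + sum_list (map ustep ss)) \<le> norm1 (ustep s) + norm1 (sum_list (map ustep ss))"
    unfolding norm1_def sum.distrib[symmetric] by (intro sum_mono) (simp add: abs_triangle_ineq)
  moreover have "norm1 (ustep s :: int^'n) = 1"
  proof -
    have "\<bar>ustep s $ i\<bar> = (if i = fst s then 1 else 0)" for i :: 'n by (simp add: ustep_nth)
    then show ?thesis unfolding norm1_def by simp
  qed
  ultimately show ?case using Cons by simp
qed

lemma D1: "(\<forall>i. 0 \<le> (v::int^'n) $ i) \<Longrightarrow> nat (csum v) = n \<Longrightarrow> \<exists>js. length js = n \<and> sum_list (map dstep js) = v"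
proof (induction n arbitrary: v)
  case 0
  then have "csum v = 0" using sum_nonneg[of UNIV "\<lambda>i. v$i"] unfolding csum_def by simp
  then have "\<forall>i\<in>UNIV. v $ i = 0" using 0 unfolding csum_def by (subst (asm) sum_nonneg_eq_0_iff) auto
  then have "v = 0" by (simp add: vec_eq_iff)
  then show ?case by (intro exI[of _ "[]"]) simp
next
  case (Suc n)
  then have "csum v \<noteq> 0" by simp
  then obtain j where j: "v $ j \<noteq> 0" unfolding csum_def by (metis sum.neutral)
  define w where "w = v - dstep j"
  have pw: "w $ i = v $ i - (if i = j then 1 else 0)" for i
    by (auto simp: w_def dstep_nth)
  have "csum w = csum v - 1"
    unfolding csum_def pw by (simp add: sum_subtractf)
  moreover have "\<forall>i. 0 \<le> w $ i"
  proof
    fix i show "0 \<le> w $ i" using Suc.prems(1)[rule_format, of i] j by (auto simp: pw)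
  qed
  moreover have "nat (csum w) = n" using calculation(1) Suc.prems(2) by simp
  ultimately obtain js where "length js = n" "sum_list (map dstep js) = w" using Suc.IH[of w] by blast
  then have "length (j # js) = Suc n \<and> sum_list (map dstep (j # js)) = v" unfolding w_def by simp
  then show ?case by blast
qed

lemma D2: "(\<forall>i. 0 \<le> (sum_list (map dstep js) :: int^'n) $ i) \<and> csum (sum_list (map dstep js) :: int^'n) = int (length js)"
proof (induction js)
  case Nil then show ?case by (simp add: csum_def)
next
  case (Cons j js)
  have "csum (dstep j :: int^'n) = 1" unfolding csum_def by (simp add: dstep_nth)
  moreover have "csum (a + b) = csum a + csum b" for a b :: "int^'n" unfolding csum_def by (simp add: sum.distrib)
  ultimately show ?case using Cons by (simp add: dstep_nth)
qed

lemma R: assumes "is_subgroup L" "N > 0" "\<forall>j. axis j N \<in> L"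
  shows "\<exists>v. (\<forall>i. 0 \<le> v $ i \<and> v $ i < N) \<and> (w::int^'n) + v \<in> L"
proof -
  define v :: "int^'n" where "v = (\<chi> i. (- (w $ i)) mod N)"
  have "N dvd (w + v) $ i" for i
  proof -
    have "(w $ i + (- (w $ i)) mod N) mod N = 0" by (simp add: mod_add_right_eq)
    then show ?thesis by (simp add: v_def dvd_eq_mod_eq_0)
  qed
  then have "w + v \<in> L" by (intro sg_dvd[OF assms(1) assms(3)]) auto
  moreover have "\<forall>i. 0 \<le> v $ i \<and> v $ i < N" using assms(2) by (simp add: v_def)
  ultimately show ?thesis by blast
qed

lemma dummy: True by simp



lemma ud_le: "x + v - y \<in> L \<Longrightarrow> udist L x y \<le> nat (norm1 (v::int^'n))"
proof -
  assume a: "x + v - y \<in> L"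
  obtain ss where "length ss = nat (norm1 v)" "sum_list (map ustep ss) = v" using U1 by blast
  then show ?thesis unfolding udist_def using a by (intro Least_le) auto
qed

lemma dd_le: "x + v - y \<in> L \<Longrightarrow> \<forall>i. 0 \<le> v $ i \<Longrightarrow> ddist L x y \<le> nat (csum (v::int^'n))"
proof -
  assume a: "x + v - y \<in> L" "\<forall>i. 0 \<le> v $ i"
  obtain js where "length js = nat (csum v)" "sum_list (map dstep js) = v" using D1 a(2) by blast
  then show ?thesis unfolding ddist_def using a by (intro Least_le) auto
qed

lemma bound_vec: assumes "is_subgroup L" "finite_index (L :: (int^'n) set)"
  shows "\<exists>K. \<forall>w. \<exists>v. (\<forall>i. 0 \<le> v $ i) \<and> csum v \<le> K \<and> w + v \<in> L"
proof -
  obtain N where N: "N > 0" "\<forall>j. axis j N \<in> L" using fi_axis[OF assms] by blast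
  have "\<exists>v. (\<forall>i. 0 \<le> v $ i) \<and> csum v \<le> int CARD('n) * N \<and> w + v \<in> L" for w
  proof -
    obtain v where v: "\<forall>i. 0 \<le> v $ i \<and> v $ i < N" "w + v \<in> L" using R[OF assms(1) N] by blast
    have "csum v \<le> of_nat (card (UNIV::'n set)) * N" unfolding csum_def
      by (rule sum_bounded_above) (use v(1) in \<open>auto simp: less_imp_le\<close>)
    then show ?thesis using v by auto
  qed
  then show ?thesis by blast
qed

lemma norm1_csum: "\<forall>i. 0 \<le> v $ i \<Longrightarrow> norm1 v = csum v"
  unfolding norm1_def csum_def by simp

lemma ud_ex: assumes "is_subgroup L" "finite_index (L :: (int^'n) set)"
  shows "\<exists>v. x + v - y \<in> L \<and> norm1 v \<le> int (udist L x y)"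
proof -
  obtain K where K: "\<forall>w. \<exists>v. (\<forall>i. 0 \<le> v $ i) \<and> csum v \<le> K \<and> w + v \<in> L" using bound_vec[OF assms] by blast
  obtain v where v: "(x - y) + v \<in> L" using K by blast
  obtain ss where "length ss = nat (norm1 v)" "sum_list (map ustep ss) = v" using U1 by blast
  then have "x + sum_list (map ustep ss) - y \<in> L" using v(1) by (simp add: algebra_simps)
  then have ex: "\<exists>k ss. length ss = k \<and> x + sum_list (map ustep ss) - y \<in> L" by blast
  obtain ss where "length ss = udist L x y" "x + sum_list (map ustep ss) - y \<in> L"
    unfolding udist_def using LeastI_ex[OF ex] by blast
  then show ?thesis using U2[of ss] by (intro exI[of _ "sum_list (map ustep ss)"]) auto
qed

lemma dd_ex: assumes "is_subgroup L" "finite_index (L :: (int^'n) set)"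
  shows "\<exists>v. x + v - y \<in> L \<and> (\<forall>i. 0 \<le> v $ i) \<and> csum v = int (ddist L x y)"
proof -
  obtain K where K: "\<forall>w. \<exists>v. (\<forall>i. 0 \<le> v $ i) \<and> csum v \<le> K \<and> w + v \<in> L" using bound_vec[OF assms] by blast
  obtain v where v: "(x - y) + v \<in> L" "\<forall>i. 0 \<le> v $ i" using K by blast
  obtain js where "length js = nat (csum v)" "sum_list (map dstep js) = v" using D1 v(2) by blast
  then have "x + sum_list (map dstep js) - y \<in> L" using v(1) by (simp add: algebra_simps)
  then have ex: "\<exists>k js. length js = k \<and> x + sum_list (map dstep js) - y \<in> L" by blast
  obtain js where "length js = ddist L x y" "x + sum_list (map dstep js) - y \<in> L"
    unfolding ddist_def using LeastI_ex[OF ex] by blast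
  then show ?thesis using D2[of js] by (intro exI[of _ "sum_list (map dstep js)"]) auto
qed

lemma ud_K: assumes "is_subgroup L" "finite_index (L :: (int^'n) set)"
  shows "\<exists>K. \<forall>x y. udist L x y \<le> K"
proof -
  obtain K where K: "\<forall>w. \<exists>v. (\<forall>i. 0 \<le> v $ i) \<and> csum v \<le> K \<and> w + v \<in> L" using bound_vec[OF assms] by blast
  have "udist L x y \<le> nat K" for x y
  proof -
    obtain v where v: "(x - y) + v \<in> L" "\<forall>i. 0 \<le> v $ i" "csum v \<le> K" using K by blast
    have "x + v - y \<in> L" using v(1) by (simp add: algebra_simps)
    then have "udist L x y \<le> nat (norm1 v)" by (rule ud_le)
    then show ?thesis using norm1_csum[OF v(2)] v(3) by simp
  qed
  then show ?thesis by blast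
qed

lemma dd_K: assumes "is_subgroup L" "finite_index (L :: (int^'n) set)"
  shows "\<exists>K. \<forall>x y. ddist L x y \<le> K"
proof -
  obtain K where K: "\<forall>w. \<exists>v. (\<forall>i. 0 \<le> v $ i) \<and> csum v \<le> K \<and> w + v \<in> L" using bound_vec[OF assms] by blast
  have "ddist L x y \<le> nat K" for x y
  proof -
    obtain v where v: "(x - y) + v \<in> L" "\<forall>i. 0 \<le> v $ i" "csum v \<le> K" using K by blast
    have "x + v - y \<in> L" using v(1) by (simp add: algebra_simps)
    then have "ddist L x y \<le> nat (csum v)" using v(2) by (rule dd_le)
    then show ?thesis using v(3) by simp
  qed
  then show ?thesis by blast
qed

lemma udiam_props: assumes "is_subgroup L" "finite_index (L :: (int^'n) set)"
  shows "(\<exists>x y. udiam L = udist L x y) \<and> (\<forall>x y. udist L x y \<le> udiam L)"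
proof -
  obtain K where K: "\<forall>x y. udist L x y \<le> K" using ud_K[OF assms] by blast
  let ?S = "{udist L x y | x y. True}"
  have mem: "udist L x y \<in> ?S" for x y unfolding mem_Collect_eq by (rule exI[of _ x], rule exI[of _ y]) simp
  have sub: "?S \<subseteq> {..K}" using K by auto
  have fin: "finite ?S" using finite_subset[OF sub] by simp
  have ne: "?S \<noteq> {}" using mem[of 0 0] by auto
  have m1: "Max ?S \<in> ?S" by (rule Max_in[OF fin ne])
  have m2: "udist L x y \<le> Max ?S" for x y by (rule Max_ge[OF fin mem])
  show ?thesis unfolding udiam_def using m1 m2 by blast
qed

lemma ddiam_props: assumes "is_subgroup L" "finite_index (L :: (int^'n) set)"
  shows "(\<exists>x y. ddiam L = ddist L x y) \<and> (\<forall>x y. ddist L x y \<le> ddiam L)"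
proof -
  obtain K where K: "\<forall>x y. ddist L x y \<le> K" using dd_K[OF assms] by blast
  let ?S = "{ddist L x y | x y. True}"
  have mem: "ddist L x y \<in> ?S" for x y unfolding mem_Collect_eq by (rule exI[of _ x], rule exI[of _ y]) simp
  have sub: "?S \<subseteq> {..K}" using K by auto
  have fin: "finite ?S" using finite_subset[OF sub] by simp
  have ne: "?S \<noteq> {}" using mem[of 0 0] by auto
  have m1: "Max ?S \<in> ?S" by (rule Max_in[OF fin ne])
  have m2: "ddist L x y \<le> Max ?S" for x y by (rule Max_ge[OF fin mem])
  show ?thesis unfolding ddiam_def using m1 m2 by blast
qed




lemma emb_nth[simp]: "emb v $ i = real_of_int (v $ i)" by (simp add: emb_def)
lemma emb_diff: "emb (a - b) = emb a - emb b" by (simp add: vec_eq_iff)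
lemma emb_add: "emb (a + b) = emb a + emb b" by (simp add: vec_eq_iff)
lemma emb_neg: "emb (- a) = - emb a" by (simp add: vec_eq_iff)

lemma frac_sum: "(\<Sum>i\<in>UNIV. (q::real^'n) $ i - real_of_int \<lfloor>q $ i\<rfloor>) < real CARD('n)"
proof -
  have f: "q $ i - real_of_int \<lfloor>q $ i\<rfloor> < 1" for i by linarith
  have "(\<Sum>i\<in>UNIV. q $ i - real_of_int \<lfloor>q $ i\<rfloor>) < (\<Sum>i\<in>(UNIV::'n set). 1)"
    by (rule sum_strict_mono) (auto intro: f)
  then show ?thesis by simp
qed

lemma real_norm1: "real_of_int (norm1 v) = (\<Sum>i\<in>UNIV. \<bar>emb v $ i\<bar>)"
  by (simp add: norm1_def)
lemma real_csum: "real_of_int (csum v) = (\<Sum>i\<in>UNIV. emb v $ i)"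
  by (simp add: csum_def)

definition Tset :: "(real^'n) set \<Rightarrow> (real^'n) set \<Rightarrow> real set" where
  "Tset B R = {t. t > 0 \<and> {l + t *\<^sub>R b | l b. l \<in> R \<and> b \<in> B} = UNIV}"

lemma cov_bounds:
  assumes "Tset B R \<noteq> {}" "\<And>t. t \<in> Tset B R \<Longrightarrow> a < t" "t0 \<in> Tset B R"
  shows "a \<le> cov_radius B R \<and> cov_radius B R \<le> t0"
proof
  have eq: "cov_radius B R = Inf (Tset B R)" unfolding cov_radius_def Tset_def by simp
  show "a \<le> cov_radius B R" unfolding eq using assms(1,2) by (intro cInf_greatest) (auto intro: less_imp_le)
  have "bdd_below (Tset B R)" unfolding Tset_def bdd_below_def by (intro exI[of _ 0]) auto
  then show "cov_radius B R \<le> t0" unfolding eq using assms(3) by (intro cInf_lower)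
qed

lemma covU:
  assumes S: "is_subgroup L" and F: "finite_index (L :: (int^'n) set)" and c: "c > 0"
  shows "c * real (udiam L) \<le> cov_radius Bu ((\<lambda>v. c *\<^sub>R v) ` rlat L)
       \<and> cov_radius Bu ((\<lambda>v. c *\<^sub>R v) ` rlat L) \<le> c * (real (udiam L) + real CARD('n))"
proof (rule cov_bounds)
  define D where "D = udiam L"
  define t0 where "t0 = c * (real D + real CARD('n))"
  have "CARD('n) > 0" by (simp add: card_gt_0_iff)
  then have Dp: "real D + real CARD('n) > 0" by linarith
  have t0p: "t0 > 0" unfolding t0_def using c Dp by simp
  have cover: "p \<in> {l + t0 *\<^sub>R b | l b. l \<in> (\<lambda>v. c *\<^sub>R v) ` rlat L \<and> b \<in> Bu}" for p
  proof -
    define q where "q = (1 / c) *\<^sub>R p"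
    define z :: "int^'n" where "z = (\<chi> i. \<lfloor>q $ i\<rfloor>)"
    obtain v where v: "0 + v - z \<in> L" "norm1 v \<le> int (udist L 0 z)" using ud_ex[OF S F] by blast
    have "udist L 0 z \<le> udiam L" using udiam_props[OF S F] by blast
    then have vD: "norm1 v \<le> int D" using v(2) unfolding D_def by linarith
    define l' where "l' = z - v"
    have l'L: "l' \<in> L" using v(1) S unfolding is_subgroup_def l'_def by (metis add_0 minus_diff_eq)
    define r where "r = q - emb l'"
    have rn: "r $ i = (q $ i - real_of_int \<lfloor>q $ i\<rfloor>) + real_of_int (v $ i)" for i
      by (simp add: r_def l'_def z_def)
    have "(\<Sum>i\<in>UNIV. \<bar>r $ i\<bar>) \<le> (\<Sum>i\<in>UNIV. (q $ i - real_of_int \<lfloor>q $ i\<rfloor>) + \<bar>real_of_int (v $ i)\<bar>)"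
      unfolding rn by (intro sum_mono) (simp add: abs_triangle_ineq order_trans[OF abs_triangle_ineq])
    also have "\<dots> = (\<Sum>i\<in>UNIV. q $ i - real_of_int \<lfloor>q $ i\<rfloor>) + real_of_int (norm1 v)"
      by (simp add: sum.distrib norm1_def)
    also have "\<dots> < real CARD('n) + real D" using frac_sum[of q] vD by linarith
    finally have rs: "(\<Sum>i\<in>UNIV. \<bar>r $ i\<bar>) < real D + real CARD('n)" by simp
    define b where "b = (1 / (real D + real CARD('n))) *\<^sub>R r"
    have "(\<Sum>i\<in>UNIV. \<bar>b $ i\<bar>) = (\<Sum>i\<in>UNIV. \<bar>r $ i\<bar>) / (real D + real CARD('n))"
      using Dp by (simp add: b_def sum_divide_distrib[symmetric])
    also have "\<dots> < 1" using rs Dp by simp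
    finally have bB: "b \<in> Bu" unfolding Bu_def by simp
    have "t0 *\<^sub>R b = c *\<^sub>R r" unfolding t0_def b_def using Dp by simp
    then have "p = c *\<^sub>R emb l' + t0 *\<^sub>R b" using c by (simp add: r_def q_def algebra_simps)
    moreover have "c *\<^sub>R emb l' \<in> (\<lambda>v. c *\<^sub>R v) ` rlat L" using l'L unfolding rlat_def by blast
    ultimately show ?thesis using bB by blast
  qed
  show t0T: "t0 \<in> Tset Bu ((\<lambda>v. c *\<^sub>R v) ` rlat L)" unfolding Tset_def using t0p cover by blast
  then show "Tset Bu ((\<lambda>v. c *\<^sub>R v) ` rlat L) \<noteq> {}" by blast
  show "c * real (udiam L) < t" if t: "t \<in> Tset Bu ((\<lambda>v. c *\<^sub>R v) ` rlat L)" for t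
  proof -
    have tp: "t > 0" using t unfolding Tset_def by simp
    obtain x0 y0 where xy: "udiam L = udist L x0 y0" using udiam_props[OF S F] by blast
    have "c *\<^sub>R emb (y0 - x0) \<in> {l + t *\<^sub>R b | l b. l \<in> (\<lambda>v. c *\<^sub>R v) ` rlat L \<and> b \<in> Bu}"
      using t unfolding Tset_def by blast
    then obtain l' b where lb: "l' \<in> L" "b \<in> Bu" "c *\<^sub>R emb (y0 - x0) = c *\<^sub>R emb l' + t *\<^sub>R b"
      unfolding rlat_def by blast
    define w where "w = y0 - x0 - l'"
    have "c *\<^sub>R emb w = t *\<^sub>R b" using lb(3) by (simp add: w_def emb_diff emb_add algebra_simps)
    then have ew: "emb w = (t / c) *\<^sub>R b" using c by (metis (no_types, lifting) divideR_right divide_inverse_commute mult.commute nonzero_mult_div_cancel_left scaleR_scaleR less_irrefl)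
    have "real_of_int (norm1 w) = (t / c) * (\<Sum>i\<in>UNIV. \<bar>b $ i\<bar>)"
      unfolding real_norm1 ew using tp c by (simp add: sum_distrib_left abs_mult)
    also have "\<dots> < t / c"
    proof -
      have "(\<Sum>i\<in>UNIV. \<bar>b $ i\<bar>) < 1" using lb(2) unfolding Bu_def by simp
      moreover have "t / c > 0" using tp c by simp
      ultimately show ?thesis by (metis mult.right_neutral mult_strict_left_mono)
    qed
    finally have nw: "real_of_int (norm1 w) < t / c" .
    have "x0 + w - y0 \<in> L" using lb(1) S unfolding w_def is_subgroup_def by (simp add: algebra_simps)
    then have "udist L x0 y0 \<le> nat (norm1 w)" by (rule ud_le)
    then have "real (udiam L) \<le> real_of_int (norm1 w)" using xy norm1_nonneg[of w] by linarith
    then have "real (udiam L) < t / c" using nw by linarith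
    then show ?thesis using c by (simp add: field_simps)
  qed
qed

lemma covD:
  assumes S: "is_subgroup L" and F: "finite_index (L :: (int^'n) set)" and c: "c > 0"
  shows "c * real (ddiam L) \<le> cov_radius Bd ((\<lambda>v. c *\<^sub>R v) ` rlat L)
       \<and> cov_radius Bd ((\<lambda>v. c *\<^sub>R v) ` rlat L) \<le> c * (real (ddiam L) + real CARD('n))"
proof (rule cov_bounds)
  define D where "D = ddiam L"
  define t0 where "t0 = c * (real D + real CARD('n))"
  have "CARD('n) > 0" by (simp add: card_gt_0_iff)
  then have Dp: "real D + real CARD('n) > 0" by linarith
  have t0p: "t0 > 0" unfolding t0_def using c Dp by simp
  have cover: "p \<in> {l + t0 *\<^sub>R b | l b. l \<in> (\<lambda>v. c *\<^sub>R v) ` rlat L \<and> b \<in> Bd}" for p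
  proof -
    define q where "q = (1 / c) *\<^sub>R p"
    define z :: "int^'n" where "z = (\<chi> i. \<lfloor>q $ i\<rfloor>)"
    obtain v where v: "0 + v - z \<in> L" "\<forall>i. 0 \<le> v $ i" "csum v = int (ddist L 0 z)" using dd_ex[OF S F] by blast
    have "ddist L 0 z \<le> ddiam L" using ddiam_props[OF S F] by blast
    then have vD: "csum v \<le> int D" using v(3) unfolding D_def by linarith
    define l' where "l' = z - v"
    have l'L: "l' \<in> L" using v(1) S unfolding is_subgroup_def l'_def by (metis add_0 minus_diff_eq)
    define r where "r = q - emb l'"
    have rn: "r $ i = (q $ i - real_of_int \<lfloor>q $ i\<rfloor>) + real_of_int (v $ i)" for i
      by (simp add: r_def l'_def z_def)
    have rpos: "0 \<le> r $ i" for i using v(2) unfolding rn by (simp add: add_nonneg_nonneg)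
    have "(\<Sum>i\<in>UNIV. r $ i) = (\<Sum>i\<in>UNIV. q $ i - real_of_int \<lfloor>q $ i\<rfloor>) + real_of_int (csum v)"
      unfolding rn by (simp add: sum.distrib csum_def)
    also have "\<dots> < real CARD('n) + real D" using frac_sum[of q] vD by linarith
    finally have rs: "(\<Sum>i\<in>UNIV. r $ i) < real D + real CARD('n)" by simp
    define b where "b = (1 / (real D + real CARD('n))) *\<^sub>R r"
    have "(\<Sum>i\<in>UNIV. b $ i) = (\<Sum>i\<in>UNIV. r $ i) / (real D + real CARD('n))"
      using Dp by (simp add: b_def sum_divide_distrib[symmetric])
    also have "\<dots> < 1" using rs Dp by simp
    finally have "(\<Sum>i\<in>UNIV. b $ i) < 1" .
    moreover have "\<forall>i. 0 \<le> b $ i" using rpos Dp by (simp add: b_def)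
    ultimately have bB: "b \<in> Bd" unfolding Bd_def by simp
    have "t0 *\<^sub>R b = c *\<^sub>R r" unfolding t0_def b_def using Dp by simp
    then have "p = c *\<^sub>R emb l' + t0 *\<^sub>R b" using c by (simp add: r_def q_def algebra_simps)
    moreover have "c *\<^sub>R emb l' \<in> (\<lambda>v. c *\<^sub>R v) ` rlat L" using l'L unfolding rlat_def by blast
    ultimately show ?thesis using bB by blast
  qed
  show t0T: "t0 \<in> Tset Bd ((\<lambda>v. c *\<^sub>R v) ` rlat L)" unfolding Tset_def using t0p cover by blast
  then show "Tset Bd ((\<lambda>v. c *\<^sub>R v) ` rlat L) \<noteq> {}" by blast
  show "c * real (ddiam L) < t" if t: "t \<in> Tset Bd ((\<lambda>v. c *\<^sub>R v) ` rlat L)" for t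
  proof -
    have tp: "t > 0" using t unfolding Tset_def by simp
    obtain x0 y0 where xy: "ddiam L = ddist L x0 y0" using ddiam_props[OF S F] by blast
    have "c *\<^sub>R emb (y0 - x0) \<in> {l + t *\<^sub>R b | l b. l \<in> (\<lambda>v. c *\<^sub>R v) ` rlat L \<and> b \<in> Bd}"
      using t unfolding Tset_def by blast
    then obtain l' b where lb: "l' \<in> L" "b \<in> Bd" "c *\<^sub>R emb (y0 - x0) = c *\<^sub>R emb l' + t *\<^sub>R b"
      unfolding rlat_def by blast
    define w where "w = y0 - x0 - l'"
    have "c *\<^sub>R emb w = t *\<^sub>R b" using lb(3) by (simp add: w_def emb_diff emb_add algebra_simps)
    then have ew: "emb w = (t / c) *\<^sub>R b" using c by (metis (no_types, lifting) divideR_right divide_inverse_commute mult.commute nonzero_mult_div_cancel_left scaleR_scaleR less_irrefl)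
    have bpos: "\<forall>i. 0 \<le> b $ i" and bs: "(\<Sum>i\<in>UNIV. b $ i) < 1" using lb(2) unfolding Bd_def by auto
    have wpos: "\<forall>i. 0 \<le> w $ i"
    proof
      fix i
      have "real_of_int (w $ i) = (t / c) * b $ i" using arg_cong[OF ew, of "\<lambda>x. x $ i"] by simp
      also have "\<dots> \<ge> 0" using bpos tp c by simp
      finally show "0 \<le> w $ i" by simp
    qed
    have "real_of_int (csum w) = (t / c) * (\<Sum>i\<in>UNIV. b $ i)"
      unfolding real_csum ew by (simp add: sum_distrib_left)
    also have "\<dots> < t / c"
    proof -
      have "t / c > 0" using tp c by simp
      then show ?thesis using bs by (metis mult.right_neutral mult_strict_left_mono)
    qed
    finally have nw: "real_of_int (csum w) < t / c" .
    have "x0 + w - y0 \<in> L" using lb(1) S unfolding w_def is_subgroup_def by (simp add: algebra_simps)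
    then have "ddist L x0 y0 \<le> nat (csum w)" using wpos by (rule dd_le)
    moreover have "csum w \<ge> 0" unfolding csum_def using wpos by (simp add: sum_nonneg)
    ultimately have "real (ddiam L) \<le> real_of_int (csum w)" using xy by linarith
    then have "real (ddiam L) < t / c" using nw by linarith
    then show ?thesis using c by (simp add: field_simps)
  qed
qed




lemma sum_take_split: "i \<le> i' \<Longrightarrow> sum_list (map f (take i' js)) = sum_list (map f (take i js)) + sum_list (map f (drop i (take i' js)))"
proof -
  assume a: "i \<le> i'"
  have "take i (take i' js) @ drop i (take i' js) = take i' js" by (rule append_take_drop_id)
  moreover have "take i (take i' js) = take i js" using a by (simp add: min_def)
  ultimately have "take i' js = take i js @ drop i (take i' js)" by simp
  then show ?thesis by (metis map_append sum_list_append)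
qed

definition Qg :: "(int^'n) set \<Rightarrow> nat \<Rightarrow> bool" where
  "Qg L k \<longleftrightarrow> k \<ge> 1 \<and> (\<exists>js. length js = k \<and> sum_list (map dstep js) \<in> L)"

lemma csum_pos: assumes "\<forall>i. 0 \<le> w $ i" "w \<noteq> (0::int^'n)" shows "csum w \<ge> 1"
proof -
  obtain j where j: "w $ j \<noteq> 0" using assms(2) by (metis vec_eq_iff zero_index)
  have "w $ j \<le> csum w" unfolding csum_def by (rule member_le_sum) (use assms(1) in auto)
  then show ?thesis using j assms(1) by (metis le_less order_trans zless_imp_add1_zle add_0)
qed

lemma girth_facts: assumes S: "is_subgroup L" and F: "finite_index (L :: (int^'n) set)"
  shows "\<exists>v0. v0 \<in> L \<and> (\<forall>i. 0 \<le> v0 $ i) \<and> csum v0 = int (dgirth L) \<and> dgirth L \<ge> 1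
     \<and> (\<forall>w. w \<in> L \<and> (\<forall>i. 0 \<le> w $ i) \<and> w \<noteq> 0 \<longrightarrow> int (dgirth L) \<le> csum w)"
proof -
  obtain N where N: "N > 0" "\<forall>j. axis j N \<in> L" using fi_axis[OF S F] by blast
  define a :: "int^'n" where "a = axis undefined N"
  have apos: "\<forall>i. 0 \<le> a $ i" using N(1) by (simp add: a_def axis_def)
  have "csum a = N" unfolding csum_def a_def by (simp add: axis_def)
  then obtain js where js: "length js = nat N" "sum_list (map dstep js) = a" using D1[OF apos] by blast
  have exQ: "\<exists>k. Qg L k" unfolding Qg_def using js N by (intro exI[of _ "nat N"]) (auto simp: a_def)
  define k0 where "k0 = (LEAST k. Qg L k)"
  have Qk0: "Qg L k0" unfolding k0_def using LeastI_ex[OF exQ] .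
  then obtain js0 where js0: "length js0 = k0" "sum_list (map dstep js0) \<in> L" "k0 \<ge> 1" unfolding Qg_def by blast
  have minQ: "\<And>k. Qg L k \<Longrightarrow> k0 \<le> k" unfolding k0_def by (rule Least_le)
  let ?P = "\<lambda>k. k \<ge> 1 \<and> (\<exists>js. length js = k \<and>
      sum_list (map dstep js) \<in> L \<and>
      (\<forall>i<k. \<forall>i'<k. i \<noteq> i' \<longrightarrow>
          sum_list (map dstep (take i js)) - sum_list (map dstep (take i' js)) \<notin> L))"
  let ?S = "\<lambda>i. sum_list (map dstep (take i js0)) :: int^'n"
  have seg: "\<not> (?S b - ?S a' \<in> L)" if ab: "a' < b" "b < k0" for a' b
  proof
    assume h: "?S b - ?S a' \<in> L"
    have "?S b = ?S a' + sum_list (map dstep (drop a' (take b js0)))" using ab by (intro sum_take_split) simp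
    then have "sum_list (map dstep (drop a' (take b js0))) \<in> L" using h by simp
    moreover have "length (drop a' (take b js0)) = b - a'" using ab js0(1) by simp
    ultimately have "Qg L (b - a')" unfolding Qg_def using ab by (metis less_imp_diff_less less_or_eq_imp_le not_less zero_less_diff Suc_leI One_nat_def) 
    then have "k0 \<le> b - a'" by (rule minQ)
    then show False using ab by simp
  qed
  have Pk0: "?P k0"
  proof (intro conjI exI[of _ js0])
    show "1 \<le> k0" using js0 by simp
    show "length js0 = k0" "sum_list (map dstep js0) \<in> L" using js0 by auto
    show "\<forall>i<k0. \<forall>i'<k0. i \<noteq> i' \<longrightarrow> ?S i - ?S i' \<notin> L"
    proof (intro allI impI)
      fix i i' assume ii: "i < k0" "i' < k0" "i \<noteq> i'"
      show "?S i - ?S i' \<notin> L"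
      proof (cases "i < i'")
        case True
        show ?thesis
        proof
          assume "?S i - ?S i' \<in> L"
          then have "- (?S i - ?S i') \<in> L" using S unfolding is_subgroup_def by blast
          then show False using seg[OF True ii(2)] by simp
        qed
      next
        case False
        then show ?thesis using seg[of i' i] ii by simp
      qed
    qed
  qed
  have dg: "dgirth L = k0" unfolding dgirth_def
  proof (rule Least_equality)
    show "?P k0" by (rule Pk0)
    fix y assume "?P y"
    then have "Qg L y" unfolding Qg_def by blast
    then show "k0 \<le> y" by (rule minQ)
  qed
  define v0 where "v0 = sum_list (map dstep js0)"
  have v0: "v0 \<in> L" "\<forall>i. 0 \<le> v0 $ i" "csum v0 = int k0" using D2[of js0] js0 unfolding v0_def by auto
  have low: "int k0 \<le> csum w" if w: "w \<in> L" "\<forall>i. 0 \<le> w $ i" "w \<noteq> 0" for w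
  proof -
    have c1: "csum w \<ge> 1" by (rule csum_pos) (use w in auto)
    obtain js where "length js = nat (csum w)" "sum_list (map dstep js) = w" using D1 w(2) by blast
    then have "Qg L (nat (csum w))" unfolding Qg_def using w(1) c1 by auto
    then have "k0 \<le> nat (csum w)" by (rule minQ)
    then show ?thesis using c1 by linarith
  qed
  show ?thesis using v0 low dg js0(3) by (intro exI[of _ v0]) auto
qed




lemma minrad: assumes S: "is_subgroup L" and F: "finite_index (L :: (int^'n) set)" and c: "c > 0"
  shows "min_radius Bd ((\<lambda>v. c *\<^sub>R v) ` rlat L) = c * real (dgirth L)"
proof -
  obtain v0 where v0: "v0 \<in> L" "\<forall>i. 0 \<le> v0 $ i" "csum v0 = int (dgirth L)" "dgirth L \<ge> 1"
    and low: "\<And>w. w \<in> L \<Longrightarrow> (\<forall>i. 0 \<le> w $ i) \<Longrightarrow> w \<noteq> 0 \<Longrightarrow> int (dgirth L) \<le> csum w"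
    using girth_facts[OF S F] by blast
  let ?R = "(\<lambda>v. c *\<^sub>R v) ` rlat L"
  let ?k = "real (dgirth L)"
  have eq: "{t. t > 0 \<and> ((\<lambda>b. t *\<^sub>R b) ` Bd) \<inter> ?R \<noteq> {0}} = {c * ?k <..}"
  proof (intro set_eqI iffI)
    fix t assume "t \<in> {t. t > 0 \<and> ((\<lambda>b. t *\<^sub>R b) ` Bd) \<inter> ?R \<noteq> {0}}"
    then have tp: "t > 0" and X: "((\<lambda>b. t *\<^sub>R b) ` Bd) \<inter> ?R \<noteq> {0}" by auto
    have "(0::real^'n) \<in> Bd" unfolding Bd_def by simp
    then have "(0::real^'n) \<in> (\<lambda>b. t *\<^sub>R b) ` Bd" by (metis image_eqI scale_zero_right)
    moreover have "(0::real^'n) \<in> ?R"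
    proof -
      have "(0::int^'n) \<in> L" using S by (simp add: is_subgroup_def)
      moreover have "emb (0::int^'n) = 0" by (simp add: vec_eq_iff)
      ultimately show ?thesis unfolding rlat_def by (metis image_eqI scale_zero_right)
    qed
    ultimately obtain y where y: "y \<in> (\<lambda>b. t *\<^sub>R b) ` Bd" "y \<in> ?R" "y \<noteq> 0" using X by blast
    then obtain b w where bw: "b \<in> Bd" "w \<in> L" "y = t *\<^sub>R b" "y = c *\<^sub>R emb w" unfolding rlat_def by blast
    have ew: "emb w = (t / c) *\<^sub>R b" using bw(3,4) c by (metis (no_types, lifting) divideR_right divide_inverse_commute mult.commute nonzero_mult_div_cancel_left scaleR_scaleR less_irrefl)
    have bpos: "\<forall>i. 0 \<le> b $ i" and bs: "(\<Sum>i\<in>UNIV. b $ i) < 1" using bw(1) unfolding Bd_def by auto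
    have wpos: "\<forall>i. 0 \<le> w $ i"
    proof
      fix i
      have "real_of_int (w $ i) = (t / c) * b $ i" using arg_cong[OF ew, of "\<lambda>x. x $ i"] by simp
      also have "\<dots> \<ge> 0" using bpos tp c by simp
      finally show "0 \<le> w $ i" by simp
    qed
    have wnz: "w \<noteq> 0" using y(3) bw(4) by (auto simp: vec_eq_iff)
    have "real_of_int (csum w) = (t / c) * (\<Sum>i\<in>UNIV. b $ i)"
      unfolding real_csum ew by (simp add: sum_distrib_left)
    also have "\<dots> < t / c"
    proof -
      have "t / c > 0" using tp c by simp
      then show ?thesis using bs by (metis mult.right_neutral mult_strict_left_mono)
    qed
    finally have "real_of_int (csum w) < t / c" .
    moreover have "int (dgirth L) \<le> csum w" using low[OF bw(2) wpos wnz] .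
    ultimately have "?k < t / c" by linarith
    then show "t \<in> {c * ?k <..}" using c by (simp add: field_simps)
  next
    fix t assume "t \<in> {c * ?k <..}"
    then have t: "c * ?k < t" by simp
    have kp: "?k \<ge> 1" using v0(4) by simp
    then have tp: "t > 0" using c t by (smt (verit) mult_pos_pos)
    define y where "y = c *\<^sub>R emb v0"
    define b where "b = (c / t) *\<^sub>R emb v0"
    have "t *\<^sub>R b = y" unfolding b_def y_def using tp by simp
    moreover have "b \<in> Bd"
    proof -
      have "\<forall>i. 0 \<le> b $ i" using v0(2) c tp by (simp add: b_def)
      moreover have "(\<Sum>i\<in>UNIV. b $ i) = (c / t) * ?k"
      proof -
        have "(\<Sum>i\<in>UNIV. b $ i) = (c / t) * (\<Sum>i\<in>UNIV. real_of_int (v0 $ i))"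
          unfolding b_def by (simp add: sum_distrib_left)
        also have "(\<Sum>i\<in>UNIV. real_of_int (v0 $ i)) = ?k" using v0(3) unfolding csum_def
          by (metis of_int_of_nat_eq of_int_sum)
        finally show ?thesis .
      qed
      moreover have "(c / t) * ?k < 1" using t tp by (simp add: field_simps)
      ultimately show ?thesis unfolding Bd_def by simp
    qed
    ultimately have y1: "y \<in> (\<lambda>b. t *\<^sub>R b) ` Bd" by blast
    have y2: "y \<in> ?R" unfolding y_def rlat_def using v0(1) by blast
    have "v0 \<noteq> 0" using v0(3,4) by (auto simp: csum_def)
    then have "y \<noteq> 0" unfolding y_def using c by (auto simp: vec_eq_iff)
    then have "((\<lambda>b. t *\<^sub>R b) ` Bd) \<inter> ?R \<noteq> {0}" using y1 y2 by blast
    then show "t \<in> {t. t > 0 \<and> ((\<lambda>b. t *\<^sub>R b) ` Bd) \<inter> ?R \<noteq> {0}}" using tp by simp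
  qed
  show ?thesis unfolding min_radius_def eq by simp
qed




lemma covol_pos: "finite_index L \<Longrightarrow> covol L > 0"
  unfolding finite_index_def covol_def cosets_def
  by (metis card_gt_0_iff empty_iff quotientI UNIV_I)

lemma img1: "(\<lambda>v. (1::real) *\<^sub>R v) ` X = (X :: (real^'n) set)"
proof -
  have "(\<lambda>v. (1::real) *\<^sub>R v) = (id :: real^'n \<Rightarrow> real^'n)" by (rule ext) simp
  then show ?thesis by simp
qed

theorem lemma3p3:
  assumes "CARD('n::finite) \<ge> 2"
  shows
   "(\<exists>C::real. \<forall>L :: (int ^ 'n) set. is_subgroup L \<and> finite_index L \<longrightarrow>
        \<bar>real (udiam L) - cov_radius Bu (rlat L)\<bar> \<le> C \<and>
        \<bar>real (covol L) powr (- 1 / real CARD('n)) * real (udiam L) - cov_radius Bu (nlat L)\<bar>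
          \<le> C * real (covol L) powr (- 1 / real CARD('n)))
  \<and> (\<exists>C::real. \<forall>L :: (int ^ 'n) set. is_subgroup L \<and> finite_index L \<longrightarrow>
        \<bar>real (ddiam L) - cov_radius Bd (rlat L)\<bar> \<le> C \<and>
        \<bar>real (covol L) powr (- 1 / real CARD('n)) * real (ddiam L) - cov_radius Bd (nlat L)\<bar>
          \<le> C * real (covol L) powr (- 1 / real CARD('n)))
  \<and> (\<exists>C::real. \<forall>L :: (int ^ 'n) set. is_subgroup L \<and> finite_index L \<longrightarrow>
        \<bar>real (dgirth L) - min_radius Bd (rlat L)\<bar> \<le> C \<and>
        \<bar>real (covol L) powr (- 1 / real CARD('n)) * real (dgirth L) - min_radius Bd (nlat L)\<bar>
          \<le> C * real (covol L) powr (- 1 / real CARD('n)))"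
proof (intro conjI)
  have cpos: "real (covol L) powr (- 1 / real CARD('n)) > 0" if "finite_index (L::(int^'n) set)" for L
    using covol_pos[OF that] by simp
  have nl: "nlat L = (\<lambda>v. (real (covol L) powr (- 1 / real CARD('n))) *\<^sub>R v) ` rlat L" for L :: "(int^'n) set"
    by (simp add: nlat_def)
  show "\<exists>C::real. \<forall>L :: (int ^ 'n) set. is_subgroup L \<and> finite_index L \<longrightarrow>
        \<bar>real (udiam L) - cov_radius Bu (rlat L)\<bar> \<le> C \<and>
        \<bar>real (covol L) powr (- 1 / real CARD('n)) * real (udiam L) - cov_radius Bu (nlat L)\<bar>
          \<le> C * real (covol L) powr (- 1 / real CARD('n))"
  proof (intro exI[of _ "real CARD('n)"] allI impI conjI)
    fix L :: "(int^'n) set" assume h: "is_subgroup L \<and> finite_index L"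
    define c where "c = real (covol L) powr (- 1 / real CARD('n))"
    have c: "c > 0" using cpos h unfolding c_def by blast
    have A: "1 * real (udiam L) \<le> cov_radius Bu (rlat L) \<and> cov_radius Bu (rlat L) \<le> 1 * (real (udiam L) + real CARD('n))"
      using covU[of L 1] h by (simp add: img1)
    then show "\<bar>real (udiam L) - cov_radius Bu (rlat L)\<bar> \<le> real CARD('n)" using A by (simp add: abs_le_iff)
    have B: "c * real (udiam L) \<le> cov_radius Bu (nlat L) \<and> cov_radius Bu (nlat L) \<le> c * (real (udiam L) + real CARD('n))"
      using covU[of L c] h c unfolding nl c_def by blast
    then show "\<bar>real (covol L) powr (- 1 / real CARD('n)) * real (udiam L) - cov_radius Bu (nlat L)\<bar>
          \<le> real CARD('n) * real (covol L) powr (- 1 / real CARD('n))"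
      unfolding c_def[symmetric] by (simp add: algebra_simps abs_le_iff)
  qed
  show "\<exists>C::real. \<forall>L :: (int ^ 'n) set. is_subgroup L \<and> finite_index L \<longrightarrow>
        \<bar>real (ddiam L) - cov_radius Bd (rlat L)\<bar> \<le> C \<and>
        \<bar>real (covol L) powr (- 1 / real CARD('n)) * real (ddiam L) - cov_radius Bd (nlat L)\<bar>
          \<le> C * real (covol L) powr (- 1 / real CARD('n))"
  proof (intro exI[of _ "real CARD('n)"] allI impI conjI)
    fix L :: "(int^'n) set" assume h: "is_subgroup L \<and> finite_index L"
    define c where "c = real (covol L) powr (- 1 / real CARD('n))"
    have c: "c > 0" using cpos h unfolding c_def by blast
    have A: "1 * real (ddiam L) \<le> cov_radius Bd (rlat L) \<and> cov_radius Bd (rlat L) \<le> 1 * (real (ddiam L) + real CARD('n))"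
      using covD[of L 1] h by (simp add: img1)
    then show "\<bar>real (ddiam L) - cov_radius Bd (rlat L)\<bar> \<le> real CARD('n)" using A by (simp add: abs_le_iff)
    have B: "c * real (ddiam L) \<le> cov_radius Bd (nlat L) \<and> cov_radius Bd (nlat L) \<le> c * (real (ddiam L) + real CARD('n))"
      using covD[of L c] h c unfolding nl c_def by blast
    then show "\<bar>real (covol L) powr (- 1 / real CARD('n)) * real (ddiam L) - cov_radius Bd (nlat L)\<bar>
          \<le> real CARD('n) * real (covol L) powr (- 1 / real CARD('n))"
      unfolding c_def[symmetric] by (simp add: algebra_simps abs_le_iff)
  qed
  show "\<exists>C::real. \<forall>L :: (int ^ 'n) set. is_subgroup L \<and> finite_index L \<longrightarrow>
        \<bar>real (dgirth L) - min_radius Bd (rlat L)\<bar> \<le> C \<and>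
        \<bar>real (covol L) powr (- 1 / real CARD('n)) * real (dgirth L) - min_radius Bd (nlat L)\<bar>
          \<le> C * real (covol L) powr (- 1 / real CARD('n))"
  proof (intro exI[of _ "0"] allI impI conjI)
    fix L :: "(int^'n) set" assume h: "is_subgroup L \<and> finite_index L"
    define c where "c = real (covol L) powr (- 1 / real CARD('n))"
    have c: "c > 0" using cpos h unfolding c_def by blast
    have "min_radius Bd (rlat L) = 1 * real (dgirth L)"
      using minrad[of L 1] h by (simp add: img1)
    then show "\<bar>real (dgirth L) - min_radius Bd (rlat L)\<bar> \<le> 0" by simp
    have "min_radius Bd (nlat L) = c * real (dgirth L)"
      using minrad[of L c] h c unfolding nl c_def by blast
    then show "\<bar>real (covol L) powr (- 1 / real CARD('n)) * real (dgirth L) - min_radius Bd (nlat L)\<bar>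
          \<le> 0 * real (covol L) powr (- 1 / real CARD('n))"
      unfolding c_def[symmetric] by simp
  qed
qed


end
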